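(* With $TS$, $\Delta$ and $P'_w$ as below, if a configuration $s\in S$ is reachable in the reconfigurable broadcast network $RBN(TS)$ (i.e. there exist $\theta_0\in\Theta_0$, $\theta$ with $\theta_0\xrightarrow{*}\theta$ in $RBN(TS)$ and a vertex $v$ of $\theta$ with $L_\theta(v)=s$), then $s$ is reachable in $TS(P'_w)$.
   Context: Fix a finite alphabet $\Sigma$; let $\Sigma_b=\{!!a:a\in\Sigma\}$ and $\Sigma_r=\{??a:a\in\Sigma\}$. A labelled WSTS is a tuple $(S,\Lambda,S_0,R,\le)$ with $S$ a set of configurations, $\Lambda$ a finite alphabet, $S_0\subseteq S$ initial, $R\subseteq S\times\Lambda\times S$, and $\le$ a well-quasi-order on $S$ compatible with $R$: if $s_1\le t_1$ and $(s_1,a,s_2)\in R$ then there is $t_2$ with $(t_1,a,t_2)\in R$ and $s_2\le t_2$. A process is a labelled WSTS with $\Lambda=\Sigma_b\cup\Sigma_r$, given by a finite set $\Delta$ of labelled rules, each rule inducing transitions of $R$ with its label, $R$ being the union of these. For $\Delta'\subseteq\Delta$, $TS(\Delta')$ is the system with the same $S,S_0,\le$ but only transitions induced by rules in $\Delta'$ (assumed a labelled WSTS). For a rule $t$, $c_t$ is the finite set of $\le$-minimal configurations at which $t$ is enabled. $B_a$ (resp. $R_a$) is the set of rules labelled $!!a$ (resp. $??a$), $Rec=\bigcup_aR_a$. A configuration $c$ is coverable if some reachable $c'$ has $c'\ge c$. $P'_0=\Delta\setminus Rec$; for $i\ge1$, $AddT_i$ is the union of $R_a$ over letters $a$ not handled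 in earlier rounds such that some $t\in B_a$ has an element of $c_t$ coverable in $TS(P'_{i-1})$, and $P'_i=P'_{i-1}\cup AddT_i$; $P'_w$ is the final set, reached when no further rules are added. An $S$-graph is a finite undirected graph $(V,E,L)$ without self-loops with $L:V\to S$; $\Theta$ is the set of all such, $\Theta_0$ those with all labels in $S_0$. Broadcast step: $(V,E,L)\xrightarrow{a}(V,E,L')$ if some $v$ has $(L(v),!!a,L'(v))\in R$, every neighbour $u$ of $v$ has $(L(u),??a,L'(u))\in R$, and all other labels unchanged. Reconfiguration step: $(V,E,L)\to(V,E',L)$ for any edge set $E'$ on $V$ without self-loops. $RBN(TS)$ is the transition system on $\Theta$ with initial set $\Theta_0$ and both kinds of steps. *)

theory Defs
  imports Main
begin

datatype 'a lab = Bc 'a | Rc 'a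

text \<open>A process: configurations S (a set of 's), initial S0, quasi-order le, a finite set
  Delta of rules (of type 'r), each rule t with label lab t and induced transition
  relation tr t.\<close>

definition wqo_on :: "'s set \<Rightarrow> ('s \<Rightarrow> 's \<Rightarrow> bool) \<Rightarrow> bool" where
  "wqo_on S le \<longleftrightarrow>
     (\<forall>x\<in>S. le x x) \<and>
     (\<forall>x\<in>S. \<forall>y\<in>S. \<forall>z\<in>S. le x y \<longrightarrow> le y z \<longrightarrow> le x z) \<and>
     (\<forall>f::nat \<Rightarrow> 's. (\<forall>i. f i \<in> S) \<longrightarrow> (\<exists>i j. i < j \<and> le (f i) (f j)))"

definition ltrans :: "('r \<Rightarrow> 'a lab) \<Rightarrow> ('r \<Rightarrow> ('s \<times> 's) set) \<Rightarrow> 'r set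
    \<Rightarrow> ('s \<times> 'a lab \<times> 's) set" where
  "ltrans lab tr D = {(s, l, s'). \<exists>t\<in>D. lab t = l \<and> (s, s') \<in> tr t}"

definition step :: "('r \<Rightarrow> ('s \<times> 's) set) \<Rightarrow> 'r set \<Rightarrow> ('s \<times> 's) set" where
  "step tr D = {(s, s'). \<exists>t\<in>D. (s, s') \<in> tr t}"

definition labelled_wsts :: "'s set \<Rightarrow> 's set \<Rightarrow> ('s \<times> 'l \<times> 's) set
    \<Rightarrow> ('s \<Rightarrow> 's \<Rightarrow> bool) \<Rightarrow> bool" where
  "labelled_wsts S S0 R le \<longleftrightarrow>
     S0 \<subseteq> S \<and> (\<forall>(s, l, s') \<in> R. s \<in> S \<and> s' \<in> S) \<and> wqo_on S le \<and>
     (\<forall>s1 t1 a s2. s1 \<in> S \<longrightarrow> t1 \<in> S \<longrightarrow> le s1 t1 \<longrightarrow> (s1, a, s2) \<in> R \<longrightarrow>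
        (\<exists>t2. (t1, a, t2) \<in> R \<and> le s2 t2))"

definition reachable :: "'s set \<Rightarrow> ('r \<Rightarrow> ('s \<times> 's) set) \<Rightarrow> 'r set \<Rightarrow> 's \<Rightarrow> bool" where
  "reachable S0 tr D c \<longleftrightarrow> (\<exists>c0\<in>S0. (c0, c) \<in> (step tr D)\<^sup>*)"

definition coverable :: "'s set \<Rightarrow> ('s \<Rightarrow> 's \<Rightarrow> bool) \<Rightarrow> ('r \<Rightarrow> ('s \<times> 's) set)
    \<Rightarrow> 'r set \<Rightarrow> 's \<Rightarrow> bool" where
  "coverable S0 le tr D c \<longleftrightarrow> (\<exists>c'. reachable S0 tr D c' \<and> le c c')"

definition enabled :: "'s set \<Rightarrow> ('r \<Rightarrow> ('s \<times> 's) set) \<Rightarrow> 'r \<Rightarrow> 's set" where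
  "enabled S tr t = {s \<in> S. \<exists>s'. (s, s') \<in> tr t}"

definition cmin :: "'s set \<Rightarrow> ('s \<Rightarrow> 's \<Rightarrow> bool) \<Rightarrow> ('r \<Rightarrow> ('s \<times> 's) set) \<Rightarrow> 'r \<Rightarrow> 's set" where
  "cmin S le tr t = {s \<in> enabled S tr t. \<forall>s' \<in> enabled S tr t. le s' s \<longrightarrow> le s s'}"

definition Bset :: "'r set \<Rightarrow> ('r \<Rightarrow> 'a lab) \<Rightarrow> 'a \<Rightarrow> 'r set" where
  "Bset Delta lab a = {t \<in> Delta. lab t = Bc a}"

definition Rset :: "'r set \<Rightarrow> ('r \<Rightarrow> 'a lab) \<Rightarrow> 'a \<Rightarrow> 'r set" where
  "Rset Delta lab a = {t \<in> Delta. lab t = Rc a}"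

definition Rec :: "'r set \<Rightarrow> ('r \<Rightarrow> 'a lab) \<Rightarrow> 'r set" where
  "Rec Delta lab = (\<Union>a. Rset Delta lab a)"

text \<open>The saturation P'_i. The state is (P'_i, letters handled so far).\<close>
fun Pstate :: "'s set \<Rightarrow> 's set \<Rightarrow> ('s \<Rightarrow> 's \<Rightarrow> bool) \<Rightarrow> 'r set \<Rightarrow> ('r \<Rightarrow> 'a lab)
    \<Rightarrow> ('r \<Rightarrow> ('s \<times> 's) set) \<Rightarrow> nat \<Rightarrow> 'r set \<times> 'a set" where
  "Pstate S S0 le Delta lab tr 0 = (Delta - Rec Delta lab, {})"
| "Pstate S S0 le Delta lab tr (Suc i) =
     (let (P, H) = Pstate S S0 le Delta lab tr i;
          N = {a. a \<notin> H \<and> (\<exists>t \<in> Bset Delta lab a. \<exists>c \<in> cmin S le tr t.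
                                   coverable S0 le tr P c)}
      in (P \<union> (\<Union>a\<in>N. Rset Delta lab a), H \<union> N))"

definition Pi :: "'s set \<Rightarrow> 's set \<Rightarrow> ('s \<Rightarrow> 's \<Rightarrow> bool) \<Rightarrow> 'r set \<Rightarrow> ('r \<Rightarrow> 'a lab)
    \<Rightarrow> ('r \<Rightarrow> ('s \<times> 's) set) \<Rightarrow> nat \<Rightarrow> 'r set" where
  "Pi S S0 le Delta lab tr i = fst (Pstate S S0 le Delta lab tr i)"

text \<open>P'_w: the final set. The chain P'_i is increasing and stabilises once no rule is
  added; its limit is the union of the chain.\<close>
definition Pw :: "'s set \<Rightarrow> 's set \<Rightarrow> ('s \<Rightarrow> 's \<Rightarrow> bool) \<Rightarrow> 'r set \<Rightarrow> ('r \<Rightarrow> 'a lab)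
    \<Rightarrow> ('r \<Rightarrow> ('s \<times> 's) set) \<Rightarrow> 'r set" where
  "Pw S S0 le Delta lab tr = (\<Union>i. Pi S S0 le Delta lab tr i)"

type_synonym ('v, 's) sgraph = "'v set \<times> ('v \<times> 'v) set \<times> ('v \<Rightarrow> 's)"

definition edge_set_on :: "'v set \<Rightarrow> ('v \<times> 'v) set \<Rightarrow> bool" where
  "edge_set_on V E \<longleftrightarrow> E \<subseteq> V \<times> V \<and> sym E \<and> (\<forall>v. (v, v) \<notin> E)"

definition sgraph :: "'s set \<Rightarrow> ('v, 's) sgraph \<Rightarrow> bool" where
  "sgraph S G \<longleftrightarrow> (case G of (V, E, L) \<Rightarrow>
      finite V \<and> edge_set_on V E \<and> (\<forall>v\<in>V. L v \<in> S))"

definition Theta0 :: "'s set \<Rightarrow> 's set \<Rightarrow> ('v, 's) sgraph set" where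
  "Theta0 S S0 = {G. sgraph S G \<and> (case G of (V, E, L) \<Rightarrow> (\<forall>v\<in>V. L v \<in> S0))}"

definition rbn_step :: "'s set \<Rightarrow> ('s \<times> 'a lab \<times> 's) set \<Rightarrow> (('v, 's) sgraph \<times> ('v, 's) sgraph) set" where
  "rbn_step S R = {(G, G'). sgraph S G \<and> sgraph S G' \<and>
     (case G of (V, E, L) \<Rightarrow> case G' of (V', E', L') \<Rightarrow> V' = V \<and>
       ((E' = E \<and> (\<exists>a. \<exists>v\<in>V. (L v, Bc a, L' v) \<in> R \<and>
             (\<forall>u. (v, u) \<in> E \<longrightarrow> (L u, Rc a, L' u) \<in> R) \<and>
             (\<forall>u. u \<noteq> v \<longrightarrow> (v, u) \<notin> E \<longrightarrow> L' u = L u)))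
        \<or> (L' = L \<and> edge_set_on V E')))}"

end

theory Submission
  imports Defs
begin

lemma Pstate_inv:
  "\<forall>a\<in>snd (Pstate S S0 le Delta lab tr i). Rset Delta lab a \<subseteq> fst (Pstate S S0 le Delta lab tr i)"
proof (induction i)
  case 0 then show ?case by simp
next
  case (Suc i)
  obtain P H where PH: "Pstate S S0 le Delta lab tr i = (P, H)" by fastforce
  define N where "N = {a. a \<notin> H \<and> (\<exists>t \<in> Bset Delta lab a. \<exists>c \<in> cmin S le tr t.
                                   coverable S0 le tr P c)}"
  have E: "Pstate S S0 le Delta lab tr (Suc i) = (P \<union> (\<Union>a\<in>N. Rset Delta lab a), H \<union> N)"
    using PH by (simp add: N_def)
  have "\<forall>a\<in>H. Rset Delta lab a \<subseteq> P" using Suc PH by simp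
  then show ?case unfolding E by auto
qed

lemma Pstate_mono: "fst (Pstate S S0 le Delta lab tr i) \<subseteq> fst (Pstate S S0 le Delta lab tr (Suc i))"
  by (cases "Pstate S S0 le Delta lab tr i") (simp add: Let_def)

lemma Pi_mono: "i \<le> j \<Longrightarrow> Pi S S0 le Delta lab tr i \<subseteq> Pi S S0 le Delta lab tr j"
  unfolding Pi_def using lift_Suc_mono_le[of "\<lambda>i. fst (Pstate S S0 le Delta lab tr i)", OF Pstate_mono] by simp

lemma step_mono: "D \<subseteq> D' \<Longrightarrow> step tr D \<subseteq> step tr D'"
  unfolding step_def by auto

lemma reach_Pi:
  assumes "(c0, c) \<in> (step tr (Pw S S0 le Delta lab tr))\<^sup>*"
  shows "\<exists>i. (c0, c) \<in> (step tr (Pi S S0 le Delta lab tr i))\<^sup>*"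
  using assms
proof (induction rule: rtrancl_induct)
  case base then show ?case by auto
next
  case (step y z)
  then obtain i where i: "(c0, y) \<in> (step tr (Pi S S0 le Delta lab tr i))\<^sup>*" by auto
  from step(2) obtain t j where t: "t \<in> Pi S S0 le Delta lab tr j" "(y, z) \<in> tr t"
    unfolding step_def Pw_def by auto
  let ?k = "max i j"
  have "step tr (Pi S S0 le Delta lab tr i) \<subseteq> step tr (Pi S S0 le Delta lab tr ?k)"
    by (intro step_mono Pi_mono) auto
  hence "(c0, y) \<in> (step tr (Pi S S0 le Delta lab tr ?k))\<^sup>*" using i rtrancl_mono by blast
  moreover have "(y, z) \<in> step tr (Pi S S0 le Delta lab tr ?k)"
    using t Pi_mono[of j ?k S S0 le Delta lab tr] unfolding step_def by auto
  ultimately show ?case by (meson rtrancl.rtrancl_into_rtrancl)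
qed

lemma Pi_sub_Pw: "Pi S S0 le Delta lab tr i \<subseteq> Pw S S0 le Delta lab tr"
  unfolding Pw_def by auto

lemma wqo_min:
  assumes w: "wqo_on S le" and xA: "x \<in> A" and AS: "A \<subseteq> S"
  shows "\<exists>c\<in>A. le c x \<and> (\<forall>s'\<in>A. le s' c \<longrightarrow> le c s')"
proof (rule ccontr)
  assume H: "\<not> ?thesis"
  have W: "(\<forall>x\<in>S. le x x) \<and>
     (\<forall>x\<in>S. \<forall>y\<in>S. \<forall>z\<in>S. le x y \<longrightarrow> le y z \<longrightarrow> le x z) \<and>
     (\<forall>f::nat \<Rightarrow> _. (\<forall>i. f i \<in> S) \<longrightarrow> (\<exists>i j. i < j \<and> le (f i) (f j)))"
    using w by (simp only: wqo_on_def)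
  have refl: "\<And>y. y \<in> S \<Longrightarrow> le y y" using conjunct1[OF W] by blast
  have trans: "\<And>x y z. x\<in>S \<Longrightarrow> y\<in>S \<Longrightarrow> z\<in>S \<Longrightarrow> le x y \<Longrightarrow> le y z \<Longrightarrow> le x z"
    using conjunct1[OF conjunct2[OF W]] by blast
  have bad: "\<And>f::nat \<Rightarrow> _. (\<forall>i. f i \<in> S) \<Longrightarrow> \<exists>i j. i < j \<and> le (f i) (f j)"
    using conjunct2[OF conjunct2[OF W]] by blast
  have nx: "\<forall>y. y \<in> A \<and> le y x \<longrightarrow> (\<exists>z. z \<in> A \<and> le z y \<and> \<not> le y z)"
  proof (intro allI impI)
    fix y assume y: "y \<in> A \<and> le y x"
    then obtain z where z: "z \<in> A" "le z y" "\<not> le y z" using H by blast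
    thus "\<exists>z. z \<in> A \<and> le z y \<and> \<not> le y z" by blast
  qed
  define g where "g = (\<lambda>y. SOME z. z \<in> A \<and> le z y \<and> \<not> le y z)"
  define f where "f = (\<lambda>n. (g ^^ n) x)"
  have P: "f n \<in> A \<and> le (f n) x" for n
  proof (induction n)
    case 0 then show ?case using xA AS refl by (auto simp: f_def)
  next
    case (Suc n)
    have "g (f n) \<in> A \<and> le (g (f n)) (f n) \<and> \<not> le (f n) (g (f n))"
      unfolding g_def by (rule someI_ex) (use nx Suc in blast)
    then show ?case using Suc trans[of "g (f n)" "f n" x] AS xA by (auto simp: f_def)
  qed
  have Q: "le (f (Suc n)) (f n) \<and> \<not> le (f n) (f (Suc n))" for n
  proof -
    have "g (f n) \<in> A \<and> le (g (f n)) (f n) \<and> \<not> le (f n) (g (f n))"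
      unfolding g_def by (rule someI_ex) (use nx P in blast)
    thus ?thesis by (simp add: f_def)
  qed
  have fS: "f n \<in> S" for n using P AS by blast
  have desc: "i < j \<Longrightarrow> le (f j) (f i)" for i j
  proof (induction j)
    case 0 then show ?case by simp
  next
    case (Suc j)
    show ?case
    proof (cases "i = j")
      case True then show ?thesis using Q by simp
    next
      case False
      hence "le (f j) (f i)" using Suc by simp
      then show ?thesis using Q[of j] trans[OF fS[of "Suc j"] fS[of j] fS[of i]] by blast
    qed
  qed
  obtain i j where ij: "i < j" "le (f i) (f j)" using bad[of f] fS by blast
  have "le (f j) (f (Suc i))"
    using ij desc[of "Suc i" j] fS refl by (cases "Suc i = j") auto
  hence "le (f i) (f (Suc i))" using ij trans[OF fS[of i] fS[of j] fS[of "Suc i"]] by blast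
  thus False using Q by blast
qed

theorem lemma11:
  fixes S S0 :: "'s set"
    and le :: "'s \<Rightarrow> 's \<Rightarrow> bool"
    and Delta :: "'r set"
    and lab :: "'r \<Rightarrow> ('a::finite) lab"
    and tr :: "'r \<Rightarrow> ('s \<times> 's) set"
    and theta0 theta :: "('v, 's) sgraph"
    and v :: 'v and s :: 's
  assumes "finite Delta"
    and "\<And>D. D \<subseteq> Delta \<Longrightarrow> labelled_wsts S S0 (ltrans lab tr D) le"
    and "theta0 \<in> Theta0 S S0"
    and "(theta0, theta) \<in> (rbn_step S (ltrans lab tr Delta))\<^sup>*"
    and "v \<in> fst theta"
    and "snd (snd theta) v = s"
  shows "reachable S0 tr (Pw S S0 le Delta lab tr) s"
proof -
  let ?P = "Pw S S0 le Delta lab tr"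
  let ?Pi = "Pi S S0 le Delta lab tr"
  have wqo: "wqo_on S le" using assms(2)[of Delta] unfolding labelled_wsts_def by blast
  have step_r: "reachable S0 tr ?P y" if R: "reachable S0 tr ?P x" "(x, y) \<in> tr t" "t \<in> ?P" for x y t
  proof -
    obtain c0 where "c0 \<in> S0" "(c0, x) \<in> (step tr ?P)\<^sup>*" using R(1) unfolding reachable_def by blast
    moreover have "(x, y) \<in> step tr ?P" using R(2,3) unfolding step_def by blast
    ultimately show ?thesis unfolding reachable_def by (meson rtrancl.rtrancl_into_rtrancl)
  qed
  have bc: "t \<in> ?P" if "t \<in> Delta" "lab t = Bc a" for t a
  proof -
    have "t \<in> ?Pi 0" using that by (auto simp: Pi_def Rec_def Rset_def)
    thus ?thesis using Pi_sub_Pw[of S S0 le Delta lab tr 0] by blast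
  qed
  have rc: "t \<in> ?P" if t: "t \<in> Delta" "lab t = Rc a" and tb: "tb \<in> Delta" "lab tb = Bc a"
      and x: "x \<in> S" "reachable S0 tr ?P x" and en: "(x, x') \<in> tr tb" for t a tb x x'
  proof -
    obtain c0 where c0: "c0 \<in> S0" "(c0, x) \<in> (step tr ?P)\<^sup>*" using x unfolding reachable_def by blast
    obtain i where i: "(c0, x) \<in> (step tr (?Pi i))\<^sup>*" using reach_Pi[OF c0(2)] by blast
    have xe: "x \<in> enabled S tr tb" using x en unfolding enabled_def by blast
    have ES: "enabled S tr tb \<subseteq> S" unfolding enabled_def by blast
    obtain c where c: "c \<in> enabled S tr tb" "le c x" "\<forall>s'\<in>enabled S tr tb. le s' c \<longrightarrow> le c s'"
      using wqo_min[OF wqo xe ES] by blast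
    have cmin: "c \<in> cmin S le tr tb" using c unfolding cmin_def by blast
    have cov: "coverable S0 le tr (?Pi i) c"
      unfolding coverable_def reachable_def using c0 i c by blast
    have tR: "t \<in> Rset Delta lab a" using t unfolding Rset_def by auto
    have tbB: "tb \<in> Bset Delta lab a" using tb unfolding Bset_def by auto
    obtain P H where PH: "Pstate S S0 le Delta lab tr i = (P, H)" by fastforce
    have "t \<in> ?Pi (Suc i)"
    proof (cases "a \<in> H")
      case True
      then have "t \<in> P" using Pstate_inv[of S S0 le Delta lab tr i] PH tR by auto
      then have "t \<in> ?Pi i" using PH by (simp add: Pi_def)
      thus ?thesis using Pi_mono[of i "Suc i" S S0 le Delta lab tr] by auto
    next
      case False
      have PP: "P = ?Pi i" using PH by (simp add: Pi_def)
      define N where "N = {a. a \<notin> H \<and> (\<exists>t \<in> Bset Delta lab a. \<exists>c \<in> cmin S le tr t.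
                                   coverable S0 le tr P c)}"
      have E: "?Pi (Suc i) = P \<union> (\<Union>a\<in>N. Rset Delta lab a)"
        using PH by (simp add: N_def Pi_def)
      have "a \<in> N" unfolding N_def using False tbB cmin cov PP by blast
      then show ?thesis unfolding E using tR by blast
    qed
    thus ?thesis using Pi_sub_Pw[of S S0 le Delta lab tr "Suc i"] by blast
  qed
  have inv: "\<forall>w\<in>fst G. snd (snd G) w \<in> S \<and> reachable S0 tr ?P (snd (snd G) w)"
    if "(theta0, G) \<in> (rbn_step S (ltrans lab tr Delta))\<^sup>*" for G
    using that
  proof (induction rule: rtrancl_induct)
    case base
    then show ?case using assms(3) unfolding Theta0_def sgraph_def reachable_def
      by (auto split: prod.splits)
  next
    case (step G G')
    obtain V E L where G: "G = (V, E, L)" by (cases G) auto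
    obtain V' E' L' where G': "G' = (V', E', L')" by (cases G') auto
    have sg: "sgraph S G'" and VV: "V' = V" and
      cs: "(E' = E \<and> (\<exists>a. \<exists>v\<in>V. (L v, Bc a, L' v) \<in> ltrans lab tr Delta \<and>
             (\<forall>u. (v, u) \<in> E \<longrightarrow> (L u, Rc a, L' u) \<in> ltrans lab tr Delta) \<and>
             (\<forall>u. u \<noteq> v \<longrightarrow> (v, u) \<notin> E \<longrightarrow> L' u = L u)))
        \<or> (L' = L \<and> edge_set_on V E')"
      using step(2) unfolding rbn_step_def G G' by auto
    have IH: "\<forall>w\<in>V. L w \<in> S \<and> reachable S0 tr ?P (L w)" using step(3) G by simp
    have LS: "\<forall>w\<in>V. L' w \<in> S" using sg VV unfolding sgraph_def G' by auto
    have "\<forall>w\<in>V. reachable S0 tr ?P (L' w)"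
      using cs
    proof
      assume "L' = L \<and> edge_set_on V E'" thus ?thesis using IH by simp
    next
      assume "E' = E \<and> (\<exists>a. \<exists>v\<in>V. (L v, Bc a, L' v) \<in> ltrans lab tr Delta \<and>
             (\<forall>u. (v, u) \<in> E \<longrightarrow> (L u, Rc a, L' u) \<in> ltrans lab tr Delta) \<and>
             (\<forall>u. u \<noteq> v \<longrightarrow> (v, u) \<notin> E \<longrightarrow> L' u = L u))"
      then obtain a v where v: "v \<in> V" "(L v, Bc a, L' v) \<in> ltrans lab tr Delta"
        and nb: "\<forall>u. (v, u) \<in> E \<longrightarrow> (L u, Rc a, L' u) \<in> ltrans lab tr Delta"
        and ot: "\<forall>u. u \<noteq> v \<longrightarrow> (v, u) \<notin> E \<longrightarrow> L' u = L u" by blast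
      obtain tb where tb: "tb \<in> Delta" "lab tb = Bc a" "(L v, L' v) \<in> tr tb"
        using v(2) unfolding ltrans_def by auto
      show ?thesis
      proof
        fix w assume w: "w \<in> V"
        show "reachable S0 tr ?P (L' w)"
        proof (cases "w = v")
          case True
          then show ?thesis using step_r[of "L v" "L' v" tb] IH v tb bc by blast
        next
          case False
          show ?thesis
          proof (cases "(v, w) \<in> E")
            case True
            obtain t where t: "t \<in> Delta" "lab t = Rc a" "(L w, L' w) \<in> tr t"
              using nb True unfolding ltrans_def by auto
            have "t \<in> ?P" using rc[OF t(1,2) tb(1,2) _ _ tb(3)] IH v by blast
            then show ?thesis using step_r[OF _ t(3)] IH w by blast
          next
            case False
            then show ?thesis using ot \<open>w \<noteq> v\<close> IH w by auto
          qed
        qed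
      qed
    qed
    then show ?case using LS G' VV by simp
  qed
  show ?thesis using inv[OF assms(4)] assms(5,6) by blast
qed

end
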